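(* Let $G$ be a CDF and define $r(v,b,\alpha)=(v-b)G(b)+\alpha\int_0^bG(y)\,dy$. Then $b^*(v,\alpha)=\arg\max_b r(v,b,\alpha)$, taking the largest maximizer in case of a tie, is a non-decreasing function of $v$ and a non-decreasing function of $\alpha$.
   Context: Here $G$ is the distribution of the highest competing bid in a repeated non-credible second-price auction, $v\in[0,1]$ is the bidder's value, $b\ge 0$ is a bid and $\alpha\in[0,1]$ is the seller's credibility parameter; $r(v,b,\alpha)$ is the bidder's expected reward when bidding $b$ with value $v$ and the winner pays $\alpha d+(1-\alpha)b$, $d\sim G$. *)

theory Defs
  imports "HOL-Analysis.Analysis"
begin

definition is_cdf :: "(real \<Rightarrow> real) \<Rightarrow> bool" where
  "is_cdf G \<longleftrightarrow> mono G \<and> (\<forall>x. continuous (at_right x) G)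
     \<and> (G \<longlongrightarrow> 0) at_bot \<and> (G \<longlongrightarrow> 1) at_top"

definition reward :: "(real \<Rightarrow> real) \<Rightarrow> real \<Rightarrow> real \<Rightarrow> real \<Rightarrow> real" where
  "reward G v b \<alpha> = (v - b) * G b + \<alpha> * integral {0..b} G"

definition is_bstar :: "(real \<Rightarrow> real) \<Rightarrow> real \<Rightarrow> real \<Rightarrow> real \<Rightarrow> bool" where
  "is_bstar G v \<alpha> b \<longleftrightarrow> b \<ge> 0
     \<and> (\<forall>c\<ge>0. reward G v c \<alpha> \<le> reward G v b \<alpha>)
     \<and> (\<forall>c\<ge>0. reward G v c \<alpha> = reward G v b \<alpha> \<longrightarrow> c \<le> b)"

end

theory Submission
  imports Defs
begin

lemma G_nonneg:
  assumes "is_cdf G" shows "0 \<le> G x"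
proof -
  have m: "mono G" and l: "(G \<longlongrightarrow> 0) at_bot" using assms unfolding is_cdf_def by auto
  have "eventually (\<lambda>y. G y \<le> G x) at_bot"
    unfolding eventually_at_bot_linorder using m by (auto simp: mono_def)
  then show ?thesis using tendsto_upperbound[OF l] by simp
qed

lemma I_mono:
  assumes "is_cdf G" "0 \<le> b'" "b' \<le> b"
  shows "integral {0..b'} G \<le> integral {0..b} G"
proof -
  have m: "mono G" using assms unfolding is_cdf_def by auto
  have int: "G integrable_on {0..b}"
    by (rule integrable_on_mono_on) (meson m mono_on_subset mono_imp_mono_on subset_UNIV)
  have "integral {0..b'} G + integral {b'..b} G = integral {0..b} G"
    using Henstock_Kurzweil_Integration.integral_combine[OF assms(2,3) int] .
  moreover have "0 \<le> integral {b'..b} G"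
    by (rule integral_nonneg) (auto intro: integrable_on_mono_on mono_imp_mono_on m G_nonneg[OF assms(1)])
  ultimately show ?thesis by linarith
qed

theorem lemma3:
  fixes G :: "real \<Rightarrow> real"
  assumes "is_cdf G"
  shows "(\<forall>\<alpha> v v' b b'. 0 \<le> \<alpha> \<and> \<alpha> \<le> 1 \<and> 0 \<le> v \<and> v \<le> v' \<and> v' \<le> 1
            \<and> is_bstar G v \<alpha> b \<and> is_bstar G v' \<alpha> b' \<longrightarrow> b \<le> b')
       \<and> (\<forall>v \<alpha> \<alpha>' b b'. 0 \<le> v \<and> v \<le> 1 \<and> 0 \<le> \<alpha> \<and> \<alpha> \<le> \<alpha>' \<and> \<alpha>' \<le> 1
            \<and> is_bstar G v \<alpha> b \<and> is_bstar G v \<alpha>' b' \<longrightarrow> b \<le> b')"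
proof (intro conjI allI impI)
  have m: "mono G" using assms unfolding is_cdf_def by auto
  fix \<alpha> v v' b b'
  assume h: "0 \<le> \<alpha> \<and> \<alpha> \<le> 1 \<and> 0 \<le> v \<and> v \<le> v' \<and> v' \<le> 1
            \<and> is_bstar G v \<alpha> b \<and> is_bstar G v' \<alpha> b'"
  show "b \<le> b'"
  proof (rule ccontr)
    assume "\<not> b \<le> b'"
    hence lt: "b' < b" by simp
    from h have b0: "0 \<le> b" "0 \<le> b'" unfolding is_bstar_def by auto
    from h b0 have r1: "reward G v b' \<alpha> \<le> reward G v b \<alpha>" unfolding is_bstar_def by auto
    from h b0 have r2: "reward G v' b \<alpha> \<le> reward G v' b' \<alpha>" unfolding is_bstar_def by auto
    from h have "\<forall>c\<ge>0. reward G v' c \<alpha> = reward G v' b' \<alpha> \<longrightarrow> c \<le> b'" unfolding is_bstar_def by blast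
    hence r3: "reward G v' b \<alpha> \<noteq> reward G v' b' \<alpha>" using b0 lt by (metis not_le)
    have g: "G b' \<le> G b" using m lt by (simp add: mono_def)
    have "(v' - v) * G b' \<le> (v' - v) * G b" using g h by (intro mult_left_mono) auto
    then show False using r1 r2 r3 unfolding reward_def by (simp add: algebra_simps)
  qed
next
  fix v \<alpha> \<alpha>' b b'
  assume h: "0 \<le> v \<and> v \<le> 1 \<and> 0 \<le> \<alpha> \<and> \<alpha> \<le> \<alpha>' \<and> \<alpha>' \<le> 1
            \<and> is_bstar G v \<alpha> b \<and> is_bstar G v \<alpha>' b'"
  show "b \<le> b'"
  proof (rule ccontr)
    assume "\<not> b \<le> b'"
    hence lt: "b' < b" by simp
    from h have b0: "0 \<le> b" "0 \<le> b'" unfolding is_bstar_def by auto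
    from h b0 have r1: "reward G v b' \<alpha> \<le> reward G v b \<alpha>" unfolding is_bstar_def by auto
    from h b0 have r2: "reward G v b \<alpha>' \<le> reward G v b' \<alpha>'" unfolding is_bstar_def by auto
    from h have "\<forall>c\<ge>0. reward G v c \<alpha>' = reward G v b' \<alpha>' \<longrightarrow> c \<le> b'" unfolding is_bstar_def by blast
    hence r3: "reward G v b \<alpha>' \<noteq> reward G v b' \<alpha>'" using b0 lt by (metis not_le)
    have g: "integral {0..b'} G \<le> integral {0..b} G" using I_mono[OF assms b0(2)] lt by simp
    have "(\<alpha>' - \<alpha>) * integral {0..b'} G \<le> (\<alpha>' - \<alpha>) * integral {0..b} G" using g h by (intro mult_left_mono) auto
    then show False using r1 r2 r3 unfolding reward_def by (simp add: algebra_simps)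
  qed
qed

end
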